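(* Let $\ell,m,n$ be positive integers with $\ell<n$, $m<n$, $\gcd(m,n)=1$, and let $d\in\{1,\dots,n-1\}$ be the multiplicative inverse of $m$ modulo $n$. Let $\mathcal{U}$ be obtained from $\mathcal{F}[\ell,m,n]$ by changing the symbols at all indices congruent to $0$ and at all indices congruent to $\ell d$ modulo $n$. Then the $d$-th left shift of $\mathcal{U}$ equals $\mathcal{F}[\ell,m,n]$, i.e. $\mathcal{F}[\ell,m,n]^{\overline0\,\overline{\ell d}\,(d)}=\mathcal{F}[\ell,m,n]$.
   Context: For positive integers $\ell<n$, $m<n$ with $\gcd(m,n)=1$, $\mathcal{F}[\ell,m,n]:\mathbb{Z}\to\{L,R\}$ is defined by $\mathcal{F}[\ell,m,n]_i=L$ if $im\bmod n<\ell$ and $R$ otherwise. For a sequence $\mathcal{S}$ of period $n$: $\mathcal{S}^{(j)}_i=\mathcal{S}_{i+j}$ (the $j$-th left shift), and $\mathcal{S}^{\overline j}$ differs from $\mathcal{S}$ exactly at indices $\equiv j\pmod n$; superscript operations are applied from left to right. *)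

theory Defs
  imports Main "HOL-Number_Theory.Cong"
begin

datatype LR = L | R

fun other :: "LR \<Rightarrow> LR" where
  "other L = R" | "other R = L"

definition mech :: "nat \<Rightarrow> nat \<Rightarrow> nat \<Rightarrow> int \<Rightarrow> LR" where
  "mech l m n i = (if (i * int m) mod int n < int l then L else R)"

definition lshift :: "int \<Rightarrow> (int \<Rightarrow> LR) \<Rightarrow> int \<Rightarrow> LR" where
  "lshift j S i = S (i + j)"

definition change_at :: "nat \<Rightarrow> int \<Rightarrow> (int \<Rightarrow> LR) \<Rightarrow> int \<Rightarrow> LR" where
  "change_at n j S i = (if [i = j] (mod int n) then other (S i) else S i)"

end

theory Submission
  imports Defs
begin

lemma cong_cancel_m:
  fixes a b :: int and m n :: nat
  assumes "coprime m n"
  shows "[a = b] (mod int n) \<longleftrightarrow> [a * int m = b * int m] (mod int n)"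
proof
  assume "[a = b] (mod int n)" thus "[a * int m = b * int m] (mod int n)" by (simp add: cong_mult)
next
  assume "[a * int m = b * int m] (mod int n)"
  moreover have "coprime (int m) (int n)" using assms by simp
  ultimately show "[a = b] (mod int n)" using cong_mult_rcancel by blast
qed

theorem corollary3p2:
  fixes l m n d :: nat
  assumes "0 < l" "0 < m" "l < n" "m < n" "coprime m n"
    and "d \<in> {1..n-1}" "[m * d = 1] (mod n)"
  shows "lshift (int d) (change_at n (int l * int d) (change_at n 0 (mech l m n))) = mech l m n"
proof
  fix i :: int
  define k where "k = i * int m mod int n"
  have n0: "int n > 0" using assms by simp
  have k: "0 \<le> k" "k < int n" using n0 k_def by auto
  have md: "[int d * int m = 1] (mod int n)" using assms(7)
    by (metis cong_int_iff mult.commute of_nat_1 of_nat_mult)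
  have A: "(i + int d) * int m mod int n = (k + 1) mod int n"
  proof -
    have "[(i + int d) * int m = i * int m + 1] (mod int n)"
      using md by (simp add: distrib_right cong_add_lcancel)
    moreover have "[i * int m + 1 = k + 1] (mod int n)" unfolding k_def
      by (simp add: cong_def mod_add_left_eq)
    ultimately show ?thesis unfolding cong_def by simp
  qed
  have B: "[i + int d = 0] (mod int n) \<longleftrightarrow> (k + 1) mod int n = 0"
    using cong_cancel_m[OF assms(5), of "i + int d" 0] A by (simp add: cong_def)
  have ldm: "[int l * int d * int m = int l] (mod int n)"
    using cong_mult[OF cong_refl[of "int l"] md] by (simp add: mult.assoc)
  have C: "[i + int d = int l * int d] (mod int n) \<longleftrightarrow> (k + 1) mod int n = int l"
  proof -
    have "[i + int d = int l * int d] (mod int n) \<longleftrightarrow> [(i + int d) * int m = int l] (mod int n)"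
      using cong_cancel_m[OF assms(5), of "i + int d" "int l * int d"] ldm
      by (meson cong_sym cong_trans)
    also have "\<dots> \<longleftrightarrow> (k + 1) mod int n = int l" using A assms by (simp add: cong_def)
    finally show ?thesis .
  qed
  have F: "mech l m n (i + int d) = (if (k + 1) mod int n < int l then L else R)"
    unfolding mech_def using A by simp
  have G: "mech l m n i = (if k < int l then L else R)" unfolding mech_def k_def by simp
  show "lshift (int d) (change_at n (int l * int d) (change_at n 0 (mech l m n))) i = mech l m n i"
  proof (cases "k + 1 = int n")
    case True
    hence "(k+1) mod int n = 0" by simp
    thus ?thesis using B C F G True assms unfolding lshift_def change_at_def by auto
  next
    case False
    hence e: "(k+1) mod int n = k + 1" using k by simp
    show ?thesis using B C F G e k assms unfolding lshift_def change_at_def by auto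
  qed
qed

end
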